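(* Let $G$ be a simple graph with $m\ge 1$ edges and $\mathcal{H}$-eigenvalues $\lambda_1\ge\lambda_2\ge\cdots\ge\lambda_m$. Let $G'$ be an induced subgraph of $G$ with $m'\ge 1$ edges and $\mathcal{H}$-eigenvalues $\lambda_1'\ge\lambda_2'\ge\cdots\ge\lambda_{m'}'$. Then for every $1\le i\le m'$, $$\lambda_i\ge\lambda_i'+\kappa_{\min}(G')\quad\text{and}\quad \lambda_i'+\kappa_{\max}(G')\ge\lambda_{m-m'+i}.$$
   Context: For an oriented edge $e$ write $e^-$ for its tail and $e^+$ for its head. For distinct edges $e,e'$: $e\leftrightarrow e'$ means $e^+=e'^-$ or $e'^+=e^-$; $e\overset{\pm}{\sim}e'$ means $e^+=e'^+$ or $e^-=e'^-$; $e\vartriangle e'$ means $e,e'$ are two edges of a common triangle of the graph. $\triangle_G(e)$ is the number of triangles of $G$ containing $e$. The Helmholtzian matrix $\mathcal{H}(G)=(h_{ee'})$ is indexed by the edges, with $h_{ee}=\triangle_G(e)+2$, and for $e\ne e'$: $h_{ee'}=-1$ if $e\leftrightarrow e'$ and not $e\vartriangle e'$; $h_{ee'}=1$ if $e\overset{\pm}{\sim}e'$ and not $e\vartriangle e'$; $h_{ee'}=0$ otherwise. The $\mathcal{H}$-eigenvalues of a graph are the eigenvalues of its Helmholtzian matrix for an arbitrary edge orientation (they do not depend on the orientation). For an induced subgraph $G'$ of $G$ and $e\in E(G')$, $\kappa_{G'}(e)=\triangle_G(e)-\triangle_{G'}(e)$, $\kappa_{\min}(G')=\min_{e\in E(G')}\kappa_{G'}(e)$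 and $\kappa_{\max}(G')=\max_{e\in E(G')}\kappa_{G'}(e)$. *)

theory Defs
  imports "Jordan_Normal_Form.Char_Poly" "HOL-Computational_Algebra.Polynomial"
begin

definition simple_graph :: "'a set \<Rightarrow> 'a set set \<Rightarrow> bool" where
  "simple_graph V E \<longleftrightarrow> finite V \<and> (\<forall>e\<in>E. e \<subseteq> V \<and> card e = 2)"

definition induced_edges :: "'a set set \<Rightarrow> 'a set \<Rightarrow> 'a set set" where
  "induced_edges E W = {e \<in> E. e \<subseteq> W}"

text \<open>An orientation assigns to each edge its tail; the head is the other endpoint.\<close>
definition orientation :: "'a set set \<Rightarrow> ('a set \<Rightarrow> 'a) \<Rightarrow> bool" where
  "orientation E ori \<longleftrightarrow> (\<forall>e\<in>E. ori e \<in> e)"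

definition etail :: "('a set \<Rightarrow> 'a) \<Rightarrow> 'a set \<Rightarrow> 'a" where
  "etail ori e = ori e"

definition ehead :: "('a set \<Rightarrow> 'a) \<Rightarrow> 'a set \<Rightarrow> 'a" where
  "ehead ori e = (THE v. v \<in> e \<and> v \<noteq> ori e)"

definition ntri :: "'a set set \<Rightarrow> 'a set \<Rightarrow> nat" where
  "ntri E e = card {w. w \<notin> e \<and> (\<forall>u\<in>e. {u, w} \<in> E)}"

definition in_common_tri :: "'a set set \<Rightarrow> 'a set \<Rightarrow> 'a set \<Rightarrow> bool" where
  "in_common_tri E e e' \<longleftrightarrow> e \<noteq> e' \<and> e \<in> E \<and> e' \<in> E \<and>
     (\<exists>a b c. a \<noteq> b \<and> b \<noteq> c \<and> a \<noteq> c \<and> {a,b} \<in> E \<and> {b,c} \<in> E \<and> {a,c} \<in> E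
        \<and> e \<subseteq> {a,b,c} \<and> e' \<subseteq> {a,b,c})"

definition head_tail_adj :: "('a set \<Rightarrow> 'a) \<Rightarrow> 'a set \<Rightarrow> 'a set \<Rightarrow> bool" where
  "head_tail_adj ori e e' \<longleftrightarrow> ehead ori e = etail ori e' \<or> ehead ori e' = etail ori e"

definition same_end_adj :: "('a set \<Rightarrow> 'a) \<Rightarrow> 'a set \<Rightarrow> 'a set \<Rightarrow> bool" where
  "same_end_adj ori e e' \<longleftrightarrow> ehead ori e = ehead ori e' \<or> etail ori e = etail ori e'"

definition helm_entry :: "'a set set \<Rightarrow> ('a set \<Rightarrow> 'a) \<Rightarrow> 'a set \<Rightarrow> 'a set \<Rightarrow> real" where
  "helm_entry E ori e e' =
    (if e = e' then real (ntri E e) + 2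
     else if head_tail_adj ori e e' \<and> \<not> in_common_tri E e e' then -1
     else if same_end_adj ori e e' \<and> \<not> in_common_tri E e e' then 1
     else 0)"

definition edge_list :: "'a set set \<Rightarrow> 'a set list" where
  "edge_list E = (SOME xs. set xs = E \<and> distinct xs)"

definition helmholtzian :: "'a set set \<Rightarrow> ('a set \<Rightarrow> 'a) \<Rightarrow> real mat" where
  "helmholtzian E ori =
    (let es = edge_list E
     in mat (length es) (length es) (\<lambda>(i, j). helm_entry E ori (es ! i) (es ! j)))"

text \<open>The i-th largest H-eigenvalue (1-indexed), eigenvalues counted with
  algebraic multiplicity as roots of the characteristic polynomial.\<close>
definition H_eig :: "'a set set \<Rightarrow> ('a set \<Rightarrow> 'a) \<Rightarrow> nat \<Rightarrow> real" where
  "H_eig E ori i = rev (sorted_list_of_multiset (proots (char_poly (helmholtzian E ori)))) ! (i - 1)"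

definition kappa :: "'a set set \<Rightarrow> 'a set set \<Rightarrow> 'a set \<Rightarrow> real" where
  "kappa E E' e = real (ntri E e) - real (ntri E' e)"

definition kappa_min :: "'a set set \<Rightarrow> 'a set set \<Rightarrow> real" where
  "kappa_min E E' = Min (kappa E E' ` E')"

definition kappa_max :: "'a set set \<Rightarrow> 'a set set \<Rightarrow> real" where
  "kappa_max E E' = Max (kappa E E' ` E')"

end

theory Submission
  imports Defs "Jordan_Normal_Form.Schur_Decomposition" "HOL-Combinatorics.List_Permutation"
begin


lemma real_sym_eigen:
  fixes A :: "real mat"
  assumes A: "A \<in> carrier_mat n n" and sym: "\<And>i j. i < n \<Longrightarrow> j < n \<Longrightarrow> A $$ (i,j) = A $$ (j,i)"
    and n: "n > 0"
  shows "\<exists>e v. v \<in> carrier_vec n \<and> v \<noteq> 0\<^sub>v n \<and> A *\<^sub>v v = e \<cdot>\<^sub>v v"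
proof -
  define Ac where "Ac = map_mat complex_of_real A"
  have Ac: "Ac \<in> carrier_mat n n" using A unfolding Ac_def by auto
  obtain as where cp: "char_poly Ac = (\<Prod>a\<leftarrow>as. [:- a, 1:])" and len: "length as = n"
    using char_poly_factorized[OF Ac] by auto
  define a where "a = hd as"
  have "a \<in> set as" using len n unfolding a_def by (cases as, auto)
  hence "poly (char_poly Ac) a = 0" unfolding cp poly_prod_list
    by (auto simp: prod_list_zero_iff)
  hence "eigenvalue Ac a" using eigenvalue_root_char_poly[OF Ac] by auto
  then obtain z where z: "z \<in> carrier_vec n" "z \<noteq> 0\<^sub>v n" "Ac *\<^sub>v z = a \<cdot>\<^sub>v z"
    unfolding eigenvalue_def eigenvector_def using Ac by auto
  define xr where "xr = (\<lambda>j. Re (z $ j))"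
  define yi where "yi = (\<lambda>j. Im (z $ j))"
  have ceq: "(\<Sum>j<n. complex_of_real (A $$ (i,j)) * z $ j) = a * z $ i" if i: "i < n" for i
  proof -
    have "(Ac *\<^sub>v z) $ i = a * z $ i" using z(3) i z(1) by (metis index_smult_vec(1) carrier_vecD)
    moreover have "(Ac *\<^sub>v z) $ i = (\<Sum>j<n. complex_of_real (A $$ (i,j)) * z $ j)"
      using i Ac A z(1) unfolding Ac_def
      by (auto simp: scalar_prod_def lessThan_atLeast0 intro!: sum.cong)
    ultimately show ?thesis by simp
  qed
  have e1: "(\<Sum>j<n. A $$ (i,j) * xr j) = Re a * xr i - Im a * yi i" if i: "i < n" for i
  proof -
    have "Re (\<Sum>j<n. complex_of_real (A $$ (i,j)) * z $ j) = Re (a * z $ i)" using ceq[OF i] by simp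
    thus ?thesis unfolding xr_def yi_def by (simp add: Re_sum)
  qed
  have e2: "(\<Sum>j<n. A $$ (i,j) * yi j) = Im a * xr i + Re a * yi i" if i: "i < n" for i
  proof -
    have "Im (\<Sum>j<n. complex_of_real (A $$ (i,j)) * z $ j) = Im (a * z $ i)" using ceq[OF i] by simp
    thus ?thesis unfolding xr_def yi_def by (simp add: Im_sum)
  qed
  have "(\<Sum>i<n. yi i * (\<Sum>j<n. A $$ (i,j) * xr j)) = (\<Sum>i<n. \<Sum>j<n. yi i * A $$ (i,j) * xr j)"
    by (simp add: sum_distrib_left mult.assoc)
  also have "\<dots> = (\<Sum>j<n. \<Sum>i<n. yi i * A $$ (i,j) * xr j)" by (rule sum.swap)
  also have "\<dots> = (\<Sum>j<n. xr j * (\<Sum>i<n. A $$ (j,i) * yi i))"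
    by (auto simp: sum_distrib_left sym intro!: sum.cong)
  finally have "(\<Sum>i<n. yi i * (Re a * xr i - Im a * yi i)) = (\<Sum>j<n. xr j * (Im a * xr j + Re a * yi j))"
    using e1 e2 by simp
  hence "Im a * ((\<Sum>j<n. (xr j)^2) + (\<Sum>j<n. (yi j)^2)) = 0"
    by (simp add: algebra_simps sum_distrib_left sum_subtractf sum.distrib power2_eq_square)
  moreover obtain j where j: "j < n" "z $ j \<noteq> 0"
    using z(1,2) by (metis carrier_vecD eq_vecI index_zero_vec(1) index_zero_vec(2))
  have pos: "(\<Sum>j<n. (xr j)^2) + (\<Sum>j<n. (yi j)^2) > 0"
  proof -
    have "xr j \<noteq> 0 \<or> yi j \<noteq> 0" using j(2) unfolding xr_def yi_def using complex_eqI by force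
    hence "(xr j)^2 + (yi j)^2 > 0" by (auto simp: sum_power2_gt_zero_iff)
    also have "\<dots> \<le> (\<Sum>j<n. (xr j)^2 + (yi j)^2)"
      by (rule member_le_sum, insert j, auto)
    finally show ?thesis by (simp add: sum.distrib)
  qed
  ultimately have Im0: "Im a = 0" by simp
  show ?thesis
  proof (cases "\<exists>j<n. xr j \<noteq> 0")
    case True
    then obtain k where k: "k < n" "xr k \<noteq> 0" by auto
    show ?thesis
    proof (intro exI conjI)
      show "vec n xr \<in> carrier_vec n" by simp
      show "vec n xr \<noteq> 0\<^sub>v n" using k by (metis index_vec index_zero_vec(1))
      show "A *\<^sub>v vec n xr = Re a \<cdot>\<^sub>v vec n xr"
        by (rule eq_vecI, insert A e1 Im0, auto simp: scalar_prod_def lessThan_atLeast0 intro!: sum.cong)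
    qed
  next
    case False
    hence "yi j \<noteq> 0" using j unfolding xr_def yi_def using complex_eqI by force
    show ?thesis
    proof (intro exI conjI)
      show "vec n yi \<in> carrier_vec n" by simp
      show "vec n yi \<noteq> 0\<^sub>v n" using j \<open>yi j \<noteq> 0\<close> by (metis index_vec index_zero_vec(1))
      show "A *\<^sub>v vec n yi = Re a \<cdot>\<^sub>v vec n yi"
        by (rule eq_vecI, insert A e2 Im0 False, auto simp: scalar_prod_def lessThan_atLeast0 intro!: sum.cong)
    qed
  qed
qed

lemma orth_complete:
  fixes v :: "real vec"
  assumes v: "v \<in> carrier_vec n" and v1: "v \<bullet> v = 1"
  shows "\<exists>ws. length ws = n \<and> set ws \<subseteq> carrier_vec n \<and> hd ws = v \<and>
      (\<forall>i<n. \<forall>j<n. ws ! i \<bullet> ws ! j = (if i = j then 1 else 0))"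
proof -
  interpret cof_vec_space n "TYPE(real)" .
  have v0: "v \<noteq> 0\<^sub>v n" using v1 by auto
  define b where "b = basis_completion v"
  note bc = basis_completion[OF v v0, folded b_def]
  define gs where "gs = gram_schmidt n b"
  note gr = gram_schmidt_result[OF bc(2) bc(4) bc(5) gs_def]
  have n0: "n \<noteq> 0" using v v0 by (metis carrier_vecD eq_vecI index_zero_vec(2) less_nat_zero_code)
  from bc(6,7) n0 obtain vs where bv: "b = v # vs" by (cases b, auto)
  have hdg: "hd gs = v" unfolding gs_def bv using gram_schmidt_hd[OF v] .
  have lg: "length gs = n" using gr(4) bc(6) by simp
  have orth: "\<And>i j. i < n \<Longrightarrow> j < n \<Longrightarrow> gs ! i \<bullet> gs ! j = 0 \<longleftrightarrow> i \<noteq> j"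
    using gr(2) lg unfolding corthogonal_def by auto
  have gpos: "gs ! i \<bullet> gs ! i > 0" if i: "i < n" for i
  proof -
    have c: "gs ! i \<in> carrier_vec n" using gr(3) lg i by auto
    have "gs ! i \<bullet>c gs ! i \<ge> 0" by (rule conjugate_square_ge_0_vec)
    moreover have "gs ! i \<bullet> gs ! i \<noteq> 0" using orth[OF i i] by simp
    ultimately show ?thesis by (metis vec_conjugate_real less_le)
  qed
  define ws where "ws = map (\<lambda>w. (1 / sqrt (w \<bullet> w)) \<cdot>\<^sub>v w) gs"
  show ?thesis
  proof (intro exI conjI allI impI)
    show "length ws = n" unfolding ws_def using lg by simp
    show "set ws \<subseteq> carrier_vec n" unfolding ws_def using gr(3) by auto
    show "hd ws = v" unfolding ws_def using hdg lg v1 v0 by (cases gs, auto)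
    fix i j assume i: "i < n" and j: "j < n"
    have ci: "gs ! i \<in> carrier_vec n" and cj: "gs ! j \<in> carrier_vec n" using gr(3) lg i j by auto
    have "ws ! i \<bullet> ws ! j = (1 / sqrt (gs!i \<bullet> gs!i)) * (1 / sqrt (gs!j \<bullet> gs!j)) * (gs ! i \<bullet> gs ! j)"
      unfolding ws_def using i j lg ci cj by (simp add: smult_scalar_prod_distrib scalar_prod_smult_distrib)
    also have "\<dots> = (if i = j then 1 else 0)"
    proof (cases "i = j")
      case True
      have p: "gs ! i \<bullet> gs ! i > 0" using gpos[OF i] .
      then show ?thesis using True
        by (simp add: field_simps)
    next
      case False thus ?thesis using orth[OF i j] by simp
    qed
    finally show "ws ! i \<bullet> ws ! j = (if i = j then 1 else 0)" .
  qed
qed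

definition diagm :: "nat \<Rightarrow> (nat \<Rightarrow> real) \<Rightarrow> real mat" where
  "diagm n d = mat n n (\<lambda>(i,j). if i = j then d i else 0)"

lemma diagm_carrier[simp]: "diagm n d \<in> carrier_mat n n" unfolding diagm_def by auto
lemma diagm_dim[simp]: "dim_row (diagm n d) = n" "dim_col (diagm n d) = n" unfolding diagm_def by auto

lemma spectral_mat:
  fixes A :: "real mat"
  assumes "A \<in> carrier_mat n n" "A\<^sup>T = A"
  shows "\<exists>U d. U \<in> carrier_mat n n \<and> U\<^sup>T * U = 1\<^sub>m n \<and> U\<^sup>T * A * U = diagm n d"
  using assms
proof (induction n arbitrary: A)
  case 0
  show ?case
    by (rule exI[of _ "1\<^sub>m 0"], rule exI[of _ "\<lambda>_. 0"], insert 0, auto intro!: eq_matI simp: diagm_def)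
next
  case (Suc k A)
  define n where "n = Suc k"
  have A: "A \<in> carrier_mat n n" using Suc n_def by auto
  have sym: "A $$ (i,j) = A $$ (j,i)" if "i < n" "j < n" for i j
    using Suc(3) that A by (metis carrier_matD index_transpose_mat(1))
  obtain e v0 where v0: "v0 \<in> carrier_vec n" "v0 \<noteq> 0\<^sub>v n" "A *\<^sub>v v0 = e \<cdot>\<^sub>v v0"
    using real_sym_eigen[OF A sym] unfolding n_def by auto
  have p: "v0 \<bullet> v0 > 0" using v0 conjugate_square_greater_0_vec[OF v0(1)] by simp
  define v where "v = (1 / sqrt (v0 \<bullet> v0)) \<cdot>\<^sub>v v0"
  have v: "v \<in> carrier_vec n" unfolding v_def using v0 by auto
  have v1: "v \<bullet> v = 1" unfolding v_def using v0(1) p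
    by (simp add: smult_scalar_prod_distrib scalar_prod_smult_distrib field_simps)
  have Av: "A *\<^sub>v v = e \<cdot>\<^sub>v v" unfolding v_def using v0 A
    by (simp add: mult_mat_vec smult_smult_assoc mult.commute)
  obtain ws where ws: "length ws = n" "set ws \<subseteq> carrier_vec n" "hd ws = v"
    "\<And>i j. i < n \<Longrightarrow> j < n \<Longrightarrow> ws ! i \<bullet> ws ! j = (if i = j then 1 else 0)"
    using orth_complete[OF v v1] by blast
  have wsi: "ws ! i \<in> carrier_vec n" if "i < n" for i using ws that by auto
  have ws0: "ws ! 0 = v" using ws(1,3) unfolding n_def by (cases ws, auto)
  define Wf where "Wf = mat_of_cols n ws"
  have Wf: "Wf \<in> carrier_mat n n" unfolding Wf_def using ws by auto
  have colW: "col Wf j = ws ! j" if "j < n" for j unfolding Wf_def using ws that wsi by simp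
  have WtW: "Wf\<^sup>T * Wf = 1\<^sub>m n"
    by (rule eq_matI, insert Wf, auto simp: colW ws(4))
  define M where "M = Wf\<^sup>T * (A * Wf)"
  have M: "M \<in> carrier_mat n n" unfolding M_def using Wf A by auto
  have Mij: "M $$ (i,j) = ws ! i \<bullet> (A *\<^sub>v ws ! j)" if "i < n" "j < n" for i j
    unfolding M_def using that Wf A by (simp add: col_mult2 colW mult_mat_vec_def)
  have Msym: "M $$ (i,j) = M $$ (j,i)" if "i < n" "j < n" for i j
  proof -
    have "ws ! i \<bullet> (A *\<^sub>v ws ! j) = (A\<^sup>T *\<^sub>v ws ! i) \<bullet> ws ! j"
      using transpose_vec_mult_scalar[OF A wsi[OF that(2)] wsi[OF that(1)]] by simp
    also have "\<dots> = ws ! j \<bullet> (A *\<^sub>v ws ! i)" using Suc(3) A wsi that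
      by (metis comm_scalar_prod mult_mat_vec_carrier)
    finally show ?thesis using Mij that by simp
  qed
  have M0: "M $$ (i,0) = (if i = 0 then e else 0)" if "i < n" for i
    using Mij[OF that, of 0] ws(4)[OF that, of 0] that wsi[OF that] v
    by (simp add: ws0 Av n_def)
  define A3 where "A3 = mat k k (\<lambda>(i,j). M $$ (Suc i, Suc j))"
  have A3: "A3 \<in> carrier_mat k k" unfolding A3_def by auto
  have A3t: "A3\<^sup>T = A3" by (rule eq_matI, insert Msym, auto simp: A3_def n_def)
  obtain U3 d3 where U3: "U3 \<in> carrier_mat k k" "U3\<^sup>T * U3 = 1\<^sub>m k" "U3\<^sup>T * A3 * U3 = diagm k d3"
    using Suc(1)[OF A3 A3t] by blast
  define Y where "Y = four_block_mat (1\<^sub>m 1) (0\<^sub>m 1 k) (0\<^sub>m k 1) U3"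
  have Y: "Y \<in> carrier_mat n n" unfolding Y_def n_def using U3 by auto
  have Yt: "Y\<^sup>T = four_block_mat (1\<^sub>m 1) (0\<^sub>m 1 k) (0\<^sub>m k 1) U3\<^sup>T"
    unfolding Y_def using U3 by (subst transpose_four_block_mat, auto)
  define E where "E = mat 1 1 (\<lambda>_. e)"
  have Mb: "M = four_block_mat E (0\<^sub>m 1 k) (0\<^sub>m k 1) A3"
  proof (rule eq_matI)
    fix i j assume i: "i < dim_row (four_block_mat E (0\<^sub>m 1 k) (0\<^sub>m k 1) A3)"
      and j: "j < dim_col (four_block_mat E (0\<^sub>m 1 k) (0\<^sub>m k 1) A3)"
    hence i': "i < n" and j': "j < n" using A3 by (auto simp: E_def n_def)
    show "M $$ (i, j) = four_block_mat E (0\<^sub>m 1 k) (0\<^sub>m k 1) A3 $$ (i, j)"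
    proof (cases "i = 0")
      case True
      have "M $$ (i, j) = (if j = 0 then e else 0)" using Msym[OF i' j'] M0[OF j'] True by metis
      thus ?thesis using True i j A3 by (simp add: E_def)
    next
      case False
      then obtain i0 where i0: "i = Suc i0" by (cases i, auto)
      show ?thesis
      proof (cases "j = 0")
        case True
        thus ?thesis using M0[OF i'] i j A3 i0 by (simp add: E_def)
      next
        case False
        then obtain j0 where j0: "j = Suc j0" by (cases j, auto)
        show ?thesis using i j A3 i0 j0 by (simp add: E_def A3_def)
      qed
    qed
  qed (insert M A3, auto simp: E_def n_def)
  define U where "U = Wf * Y"
  define d where "d = (\<lambda>i. if i = 0 then e else d3 (i - 1))"
  have Ut: "U\<^sup>T = Y\<^sup>T * Wf\<^sup>T" unfolding U_def using transpose_mult[OF Wf Y] .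
  have Wt: "Wf\<^sup>T \<in> carrier_mat n n" and Yt': "Y\<^sup>T \<in> carrier_mat n n" using Wf Y by auto
  have "U\<^sup>T * U = Y\<^sup>T * ((Wf\<^sup>T * Wf) * Y)" unfolding Ut unfolding U_def
    using assoc_mult_mat[OF Yt' Wt mult_carrier_mat[OF Wf Y]] assoc_mult_mat[OF Wt Wf Y] by simp
  also have "\<dots> = Y\<^sup>T * Y" unfolding WtW using Y by simp
  also have "\<dots> = 1\<^sub>m n"
  proof -
    have U3t: "U3\<^sup>T \<in> carrier_mat k k" using U3 by auto
    have "Y\<^sup>T * Y = four_block_mat (1\<^sub>m 1) (0\<^sub>m 1 k) (0\<^sub>m k 1) (U3\<^sup>T * U3)"
      unfolding Yt unfolding Y_def
      by (subst mult_four_block_mat[OF one_carrier_mat zero_carrier_mat zero_carrier_mat U3t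
          one_carrier_mat zero_carrier_mat zero_carrier_mat U3(1)], insert U3t U3, simp)
    also have "\<dots> = 1\<^sub>m n" unfolding U3(2) four_block_one_mat n_def by simp
    finally show ?thesis .
  qed
  finally have UtU: "U\<^sup>T * U = 1\<^sub>m n" .
  have "U\<^sup>T * A * U = Y\<^sup>T * M * Y"
  proof -
    have "U\<^sup>T * A * U = Y\<^sup>T * (Wf\<^sup>T * A) * (Wf * Y)" unfolding Ut unfolding U_def
      using assoc_mult_mat[OF Yt' Wt A] by simp
    also have "\<dots> = Y\<^sup>T * ((Wf\<^sup>T * A) * (Wf * Y))"
      using assoc_mult_mat[OF Yt' mult_carrier_mat[OF Wt A] mult_carrier_mat[OF Wf Y]] .
    also have "(Wf\<^sup>T * A) * (Wf * Y) = Wf\<^sup>T * (A * Wf) * Y"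
      using assoc_mult_mat[OF Wt A mult_carrier_mat[OF Wf Y]] assoc_mult_mat[OF A Wf Y]
        assoc_mult_mat[OF Wt mult_carrier_mat[OF A Wf] Y] by simp
    also have "Y\<^sup>T * (Wf\<^sup>T * (A * Wf) * Y) = Y\<^sup>T * M * Y" unfolding M_def
      using assoc_mult_mat[OF Yt' M[unfolded M_def] Y] by simp
    finally show ?thesis .
  qed
  also have "\<dots> = four_block_mat E (0\<^sub>m 1 k) (0\<^sub>m k 1) (U3\<^sup>T * A3 * U3)"
  proof -
    have E: "E \<in> carrier_mat 1 1" unfolding E_def by auto
    have U3t: "U3\<^sup>T \<in> carrier_mat k k" using U3 by auto
    have "Y\<^sup>T * M = four_block_mat E (0\<^sub>m 1 k) (0\<^sub>m k 1) (U3\<^sup>T * A3)"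
      unfolding Yt Mb
      by (subst mult_four_block_mat[OF one_carrier_mat zero_carrier_mat zero_carrier_mat U3t E
          zero_carrier_mat zero_carrier_mat A3], insert E U3t A3, simp)
    also have "\<dots> * Y = four_block_mat E (0\<^sub>m 1 k) (0\<^sub>m k 1) (U3\<^sup>T * A3 * U3)"
      unfolding Y_def
      by (subst mult_four_block_mat[OF E zero_carrier_mat zero_carrier_mat mult_carrier_mat[OF U3t A3]
          one_carrier_mat zero_carrier_mat zero_carrier_mat U3(1)], insert E U3t A3 U3, simp)
    finally show ?thesis .
  qed
  also have "\<dots> = diagm n d" unfolding U3(3)
    by (rule eq_matI, auto simp: diagm_def E_def d_def n_def)
  finally have "U\<^sup>T * A * U = diagm n d" .
  moreover have "U \<in> carrier_mat n n" unfolding U_def using Wf Y by auto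
  ultimately show ?case using UtU unfolding n_def by blast
qed

lemma proots_lin_prod: "proots (\<Prod>a\<leftarrow>ds. [:- a, 1:]) = mset (ds :: real list)"
proof -
  have "proots (\<Prod>a\<leftarrow>ds. [:- a, 1:]) = sum_list (map proots (map (\<lambda>a. [:- a, 1:]) ds))"
  proof -
    have "0 \<notin> set (map (\<lambda>a. [:- a, 1:]) ds)" by auto
    from proots_prod_list[OF this] show ?thesis by simp
  qed
  also have "\<dots> = (\<Sum>a\<leftarrow>ds. {#a#})" by (simp add: proots_linear_factor o_def)
  finally show ?thesis by (simp add: sum_list_singleton_mset)
qed

lemma spectral_sorted:
  fixes A :: "real mat"
  assumes A: "A \<in> carrier_mat n n" and At: "A\<^sup>T = A"
  defines "L \<equiv> rev (sorted_list_of_multiset (proots (char_poly A)))"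
  shows "\<exists>U d p. U \<in> carrier_mat n n \<and> U\<^sup>T * U = 1\<^sub>m n \<and> U * U\<^sup>T = 1\<^sub>m n \<and>
     U\<^sup>T * A * U = diagm n d \<and> p permutes {..<n} \<and> (\<forall>i<n. L ! i = d (p i)) \<and>
     length L = n \<and> (\<forall>i j. i \<le> j \<longrightarrow> j < n \<longrightarrow> L ! j \<le> L ! i)"
proof -
  obtain U d where U: "U \<in> carrier_mat n n" "U\<^sup>T * U = 1\<^sub>m n" "U\<^sup>T * A * U = diagm n d"
    using spectral_mat[OF A At] by blast
  have Ut: "U\<^sup>T \<in> carrier_mat n n" using U by auto
  have UUt: "U * U\<^sup>T = 1\<^sub>m n" using mat_mult_left_right_inverse[OF Ut U(1) U(2)] .
  define D where "D = diagm n d"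
  have D: "D \<in> carrier_mat n n" unfolding D_def by simp
  have "U * D * U\<^sup>T = U * (U\<^sup>T * A * U) * U\<^sup>T" unfolding D_def U(3) ..
  also have "\<dots> = (U * U\<^sup>T) * A * (U * U\<^sup>T)"
  proof -
    have "U * (U\<^sup>T * A * U) * U\<^sup>T = U * ((U\<^sup>T * A * U) * U\<^sup>T)"
      using assoc_mult_mat[OF U(1) mult_carrier_mat[OF mult_carrier_mat[OF Ut A] U(1)] Ut] .
    also have "(U\<^sup>T * A * U) * U\<^sup>T = (U\<^sup>T * A) * (U * U\<^sup>T)"
      using assoc_mult_mat[OF mult_carrier_mat[OF Ut A] U(1) Ut] .
    also have "U * ((U\<^sup>T * A) * (U * U\<^sup>T)) = (U * U\<^sup>T * A) * (U * U\<^sup>T)"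
      using assoc_mult_mat[OF U(1) mult_carrier_mat[OF Ut A] mult_carrier_mat[OF U(1) Ut]]
        assoc_mult_mat[OF U(1) Ut A] by simp
    finally show ?thesis .
  qed
  also have "\<dots> = A" unfolding UUt using A by simp
  finally have ADU: "A = U * D * U\<^sup>T" ..
  have "similar_mat A D" unfolding similar_mat_def
    by (rule exI[of _ U], rule exI[of _ "U\<^sup>T"], unfold similar_mat_wit_def Let_def,
        insert A D U Ut UUt ADU, auto)
  hence "char_poly A = char_poly D" by (rule char_poly_similar)
  also have "\<dots> = (\<Prod>a\<leftarrow>diag_mat D. [:- a, 1:])"
    by (rule char_poly_upper_triangular[OF D], auto simp: upper_triangular_def D_def diagm_def)
  also have "diag_mat D = map d [0..<n]" unfolding diag_mat_def D_def diagm_def by auto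
  finally have cp: "char_poly A = (\<Prod>a\<leftarrow>map d [0..<n]. [:- a, 1:])" .
  define ds where "ds = map d [0..<n]"
  have Ld: "L = rev (sort ds)" unfolding L_def cp proots_lin_prod ds_def
    by (simp only: sorted_list_of_multiset_mset)
  have lenL: "length L = n" unfolding Ld ds_def by simp
  have "mset L = mset ds" unfolding Ld by simp
  then obtain p where p: "p permutes {..<length ds}" "permute_list p ds = L"
    by (rule mset_eq_permutation)
  have p': "p permutes {..<n}" using p(1) unfolding ds_def by simp
  have Lp: "L ! i = d (p i)" if i: "i < n" for i
  proof -
    have "L ! i = ds ! p i" unfolding p(2)[symmetric] using permute_list_nth[OF p(1)] i
      unfolding ds_def by simp
    moreover have "p i < n" using permutes_in_image[OF p', of i] i by simp
    ultimately show ?thesis unfolding ds_def by simp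
  qed
  have mono: "L ! j \<le> L ! i" if "i \<le> j" "j < n" for i j
  proof -
    have ls: "length (sort ds) = n" unfolding ds_def by simp
    have "L ! j = sort ds ! (n - Suc j)" "L ! i = sort ds ! (n - Suc i)"
      unfolding Ld using that ls by (auto simp: rev_nth)
    moreover have "sort ds ! (n - Suc j) \<le> sort ds ! (n - Suc i)"
      by (rule sorted_nth_mono, insert that ls, auto)
    ultimately show ?thesis by simp
  qed
  show ?thesis using U UUt p' Lp lenL mono unfolding D_def by blast
qed

lemma hom_sys:
  fixes M :: "nat \<Rightarrow> nat \<Rightarrow> real"
  assumes "p < k"
  shows "\<exists>a. (\<exists>j<k. a j \<noteq> 0) \<and> (\<forall>i<p. (\<Sum>j<k. M i j * a j) = 0)"
  using assms
proof (induction k arbitrary: p M)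
  case 0 thus ?case by simp
next
  case (Suc k p M)
  show ?case
  proof (cases "\<forall>i<p. M i k = 0")
    case True
    show ?thesis
      by (rule exI[of _ "\<lambda>j. if j = k then 1 else 0"], insert True, auto simp: if_distrib cong: if_cong)
  next
    case False
    then obtain i0 where i0: "i0 < p" "M i0 k \<noteq> 0" by auto
    then obtain p' where pp: "p = Suc p'" by (cases p, auto)
    have pk: "p' < k" using Suc(2) pp by simp
    define sg where "sg = (\<lambda>i. if i = i0 then p' else i)"
    define N where "N = (\<lambda>i j. M (sg i) j - M (sg i) k / M i0 k * M i0 j)"
    obtain b where b: "\<exists>j<k. b j \<noteq> 0" "\<forall>i<p'. (\<Sum>j<k. N i j * b j) = 0"
      using Suc(1)[OF pk, of N] by blast
    define S0 where "S0 = (\<Sum>j<k. M i0 j * b j)"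
    define a where "a = (\<lambda>j. if j < k then b j else if j = k then - S0 / M i0 k else 0)"
    show ?thesis
    proof (rule exI[of _ a], intro conjI allI impI)
      show "\<exists>j<Suc k. a j \<noteq> 0" using b(1) unfolding a_def by auto
      fix i assume i: "i < p"
      have sumeq: "(\<Sum>j<Suc k. M i j * a j) = (\<Sum>j<k. M i j * b j) + M i k * (- S0 / M i0 k)"
        by (simp add: a_def)
      show "(\<Sum>j<Suc k. M i j * a j) = 0"
      proof (cases "i = i0")
        case True
        thus ?thesis unfolding sumeq using i0(2) by (simp add: S0_def)
      next
        case False
        obtain i1 where i1: "i1 < p'" "sg i1 = i"
        proof (cases "i < p'")
          case True thus ?thesis using that[of i] False unfolding sg_def by auto
        next
          case False': False
          hence "i = p'" using i pp by simp
          moreover have "i0 < p'" using i0(1) pp \<open>i \<noteq> i0\<close> \<open>i = p'\<close> by simp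
          ultimately show ?thesis using that[of i0] unfolding sg_def by auto
        qed
        have "0 = (\<Sum>j<k. N i1 j * b j)" using b(2) i1(1) by simp
        also have "\<dots> = (\<Sum>j<k. M i j * b j) - M i k / M i0 k * S0"
          unfolding N_def i1(2) S0_def by (simp add: algebra_simps sum_subtractf sum_distrib_left)
        finally show ?thesis unfolding sumeq by (simp add: field_simps)
      qed
    qed
  qed
qed

lemma diagm_mult_vec: assumes "c \<in> carrier_vec n" "i < n" shows "(diagm n d *\<^sub>v c) $ i = d i * c $ i"
proof -
  have "(diagm n d *\<^sub>v c) $ i = (\<Sum>j\<in>{0..<n}. (if i = j then d i else 0) * c $ j)"
    using assms by (auto simp: diagm_def scalar_prod_def intro!: sum.cong)
  also have "\<dots> = (\<Sum>j\<in>{0..<n}. (if i = j then d i * c $ j else 0))"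
    by (rule sum.cong, auto)
  also have "\<dots> = d i * c $ i" using assms by simp
  finally show ?thesis .
qed

lemma coords:
  fixes A U :: "real mat"
  assumes A: "A \<in> carrier_mat n n" and U: "U \<in> carrier_mat n n" and UtU: "U\<^sup>T * U = 1\<^sub>m n"
    and UUt: "U * U\<^sup>T = 1\<^sub>m n" and D: "U\<^sup>T * A * U = diagm n d"
    and x: "x \<in> carrier_vec n"
  shows "x \<bullet> x = (\<Sum>i<n. ((U\<^sup>T *\<^sub>v x) $ i)^2)"
    and "x \<bullet> (A *\<^sub>v x) = (\<Sum>i<n. d i * ((U\<^sup>T *\<^sub>v x) $ i)^2)"
proof -
  define c where "c = U\<^sup>T *\<^sub>v x"
  have Ut: "U\<^sup>T \<in> carrier_mat n n" using U by auto
  have c: "c \<in> carrier_vec n" unfolding c_def using Ut x by auto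
  have xc: "x = U *\<^sub>v c" unfolding c_def
    using assoc_mult_mat_vec[OF U Ut x] UUt x by simp
  have gen: "(U *\<^sub>v c) \<bullet> w = c \<bullet> (U\<^sup>T *\<^sub>v w)" if w: "w \<in> carrier_vec n" for w
  proof -
    have "(U *\<^sub>v c) \<bullet> w = w \<bullet> (U *\<^sub>v c)" using U c w by (metis comm_scalar_prod mult_mat_vec_carrier)
    also have "\<dots> = (U\<^sup>T *\<^sub>v w) \<bullet> c" using transpose_vec_mult_scalar[OF U c w] by simp
    also have "\<dots> = c \<bullet> (U\<^sup>T *\<^sub>v w)" using Ut c w by (metis comm_scalar_prod mult_mat_vec_carrier)
    finally show ?thesis .
  qed
  have "x \<bullet> x = c \<bullet> (U\<^sup>T *\<^sub>v (U *\<^sub>v c))" unfolding xc[symmetric] using gen[OF x] xc by simp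
  also have "U\<^sup>T *\<^sub>v (U *\<^sub>v c) = c" using assoc_mult_mat_vec[OF Ut U c] UtU c by simp
  also have "c \<bullet> c = (\<Sum>i<n. (c $ i)^2)" using c by (simp add: scalar_prod_def power2_eq_square lessThan_atLeast0)
  finally show "x \<bullet> x = (\<Sum>i<n. ((U\<^sup>T *\<^sub>v x) $ i)^2)" unfolding c_def .
  have Axc: "A *\<^sub>v x \<in> carrier_vec n" using A x by auto
  have "x \<bullet> (A *\<^sub>v x) = c \<bullet> (U\<^sup>T *\<^sub>v (A *\<^sub>v (U *\<^sub>v c)))" using gen[OF Axc] xc by simp
  also have "U\<^sup>T *\<^sub>v (A *\<^sub>v (U *\<^sub>v c)) = (U\<^sup>T * A * U) *\<^sub>v c"
    using assoc_mult_mat_vec[OF Ut A mult_mat_vec_carrier[OF U c]] assoc_mult_mat_vec[OF mult_carrier_mat[OF Ut A] U c]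
    by simp
  also have "c \<bullet> (\<dots>) = (\<Sum>i<n. d i * (c $ i)^2)" unfolding D using c
    unfolding scalar_prod_def lessThan_atLeast0
    by (intro sum.cong, auto simp: diagm_mult_vec[OF c] power2_eq_square simp del: index_mult_mat_vec)
  finally show "x \<bullet> (A *\<^sub>v x) = (\<Sum>i<n. d i * ((U\<^sup>T *\<^sub>v x) $ i)^2)" unfolding c_def .
qed

lemma family:
  fixes A U :: "real mat"
  assumes A: "A \<in> carrier_mat n n" and U: "U \<in> carrier_mat n n" and UtU: "U\<^sup>T * U = 1\<^sub>m n"
    and UUt: "U * U\<^sup>T = 1\<^sub>m n" and D: "U\<^sup>T * A * U = diagm n d"
    and g: "inj_on g {..<r}" "\<And>j. j < r \<Longrightarrow> g j < n"
  shows "\<exists>F \<in> carrier_mat n r. F\<^sup>T * F = 1\<^sub>m r \<and> (\<forall>a \<in> carrier_vec r.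
     (\<forall>\<beta>. (\<forall>j<r. \<beta> \<le> d (g j)) \<longrightarrow> \<beta> * ((F *\<^sub>v a) \<bullet> (F *\<^sub>v a)) \<le> (F *\<^sub>v a) \<bullet> (A *\<^sub>v (F *\<^sub>v a))) \<and>
     (\<forall>\<beta>. (\<forall>j<r. d (g j) \<le> \<beta>) \<longrightarrow> (F *\<^sub>v a) \<bullet> (A *\<^sub>v (F *\<^sub>v a)) \<le> \<beta> * ((F *\<^sub>v a) \<bullet> (F *\<^sub>v a))))"
proof -
  define S where "S = mat n r (\<lambda>(i,j). if i = g j then 1 else (0::real))"
  have S: "S \<in> carrier_mat n r" unfolding S_def by auto
  have Ut: "U\<^sup>T \<in> carrier_mat n n" using U by auto
  define F where "F = U * S"
  have F: "F \<in> carrier_mat n r" unfolding F_def using U S by auto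
  have StS: "S\<^sup>T * S = 1\<^sub>m r"
  proof (rule eq_matI)
    fix a b assume "a < dim_row (1\<^sub>m r)" "b < dim_col (1\<^sub>m r)"
    hence a: "a < r" and b: "b < r" by auto
    have "(S\<^sup>T * S) $$ (a, b) = (\<Sum>i<n. (if i = g a then 1 else 0) * (if i = g b then 1 else (0::real)))"
      using a b S unfolding S_def by (auto simp: scalar_prod_def lessThan_atLeast0 intro!: sum.cong)
    also have "\<dots> = (\<Sum>i<n. if i = g a then (if g a = g b then 1 else 0) else 0)"
      by (rule sum.cong, auto)
    also have "\<dots> = (if g a = g b then 1 else 0)" using g(2)[OF a] by simp
    also have "\<dots> = 1\<^sub>m r $$ (a, b)" using g(1) a b by (auto simp: inj_on_def)
    finally show "(S\<^sup>T * S) $$ (a, b) = 1\<^sub>m r $$ (a, b)" .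
  qed (insert S, auto)
  have FtF: "F\<^sup>T * F = 1\<^sub>m r"
  proof -
    have St: "S\<^sup>T \<in> carrier_mat r n" using S by auto
    have "F\<^sup>T * F = S\<^sup>T * U\<^sup>T * (U * S)" unfolding F_def using transpose_mult[OF U S] by simp
    also have "\<dots> = S\<^sup>T * ((U\<^sup>T * U) * S)"
      using assoc_mult_mat[OF St Ut mult_carrier_mat[OF U S]] assoc_mult_mat[OF Ut U S] by simp
    finally show ?thesis using StS S UtU by simp
  qed
  show ?thesis
  proof (intro bexI[OF _ F] conjI FtF ballI allI impI)
    fix a :: "real vec" assume a: "a \<in> carrier_vec r"
    define y where "y = S *\<^sub>v a"
    have y: "y \<in> carrier_vec n" unfolding y_def using S a by auto
    have x: "F *\<^sub>v a = U *\<^sub>v y" unfolding F_def y_def using assoc_mult_mat_vec[OF U S a] .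
    have xc: "F *\<^sub>v a \<in> carrier_vec n" using F a by auto
    have cy: "U\<^sup>T *\<^sub>v (F *\<^sub>v a) = y" unfolding x using assoc_mult_mat_vec[OF Ut U y] UtU y by simp
    note co = coords[OF A U UtU UUt D xc, unfolded cy]
    have ynz: "\<exists>j<r. i = g j" if "i < n" "y $ i \<noteq> 0" for i
    proof (rule ccontr)
      assume "\<not> ?thesis"
      hence "y $ i = 0" unfolding y_def using that(1) S a unfolding S_def
        by (auto simp: scalar_prod_def intro!: sum.neutral)
      thus False using that by simp
    qed
    {
      fix \<beta> assume bd: "\<forall>j<r. \<beta> \<le> d (g j)"
      have "\<beta> * ((F *\<^sub>v a) \<bullet> (F *\<^sub>v a)) = (\<Sum>i<n. \<beta> * (y $ i)^2)" unfolding co(1) by (simp add: sum_distrib_left)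
      also have "\<dots> \<le> (\<Sum>i<n. d i * (y $ i)^2)"
      proof (rule sum_mono)
        fix i assume i: "i \<in> {..<n}"
        show "\<beta> * (y $ i)^2 \<le> d i * (y $ i)^2"
        proof (cases "y $ i = 0")
          case False
          then obtain j where "j < r" "i = g j" using ynz i by auto
          thus ?thesis using bd by (auto intro: mult_right_mono)
        qed simp
      qed
      finally show "\<beta> * ((F *\<^sub>v a) \<bullet> (F *\<^sub>v a)) \<le> (F *\<^sub>v a) \<bullet> (A *\<^sub>v (F *\<^sub>v a))" unfolding co(2) .
    }
    {
      fix \<beta> assume bd: "\<forall>j<r. d (g j) \<le> \<beta>"
      have "(F *\<^sub>v a) \<bullet> (A *\<^sub>v (F *\<^sub>v a)) \<le> (\<Sum>i<n. \<beta> * (y $ i)^2)" unfolding co(2)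
      proof (rule sum_mono)
        fix i assume i: "i \<in> {..<n}"
        show "d i * (y $ i)^2 \<le> \<beta> * (y $ i)^2"
        proof (cases "y $ i = 0")
          case False
          then obtain j where "j < r" "i = g j" using ynz i by auto
          thus ?thesis using bd by (auto intro: mult_right_mono)
        qed simp
      qed
      also have "\<dots> = \<beta> * ((F *\<^sub>v a) \<bullet> (F *\<^sub>v a))" unfolding co(1) by (simp add: sum_distrib_left)
      finally show "(F *\<^sub>v a) \<bullet> (A *\<^sub>v (F *\<^sub>v a)) \<le> \<beta> * ((F *\<^sub>v a) \<bullet> (F *\<^sub>v a))" .
    }
  qed
qed

lemma isometry:
  fixes F :: "real mat"
  assumes F: "F \<in> carrier_mat n k" and FtF: "F\<^sup>T * F = 1\<^sub>m k" and a: "a \<in> carrier_vec k"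
  shows "(F *\<^sub>v a) \<bullet> (F *\<^sub>v a) = a \<bullet> a"
proof -
  have Ft: "F\<^sup>T \<in> carrier_mat k n" using F by auto
  have Fa: "F *\<^sub>v a \<in> carrier_vec n" using F a by auto
  have "(F *\<^sub>v a) \<bullet> (F *\<^sub>v a) = (F\<^sup>T *\<^sub>v (F *\<^sub>v a)) \<bullet> a"
    using transpose_vec_mult_scalar[OF F a Fa] by simp
  also have "F\<^sup>T *\<^sub>v (F *\<^sub>v a) = a" using assoc_mult_mat_vec[OF Ft F a] FtF a by simp
  finally show ?thesis .
qed

lemma pos_of_nz:
  assumes "a \<in> carrier_vec k" "j < k" "a $ j \<noteq> (0::real)"
  shows "a \<bullet> a > 0"
proof -
  have "a \<bullet> a = (\<Sum>i\<in>{0..<k}. (a $ i)^2)" using assms by (simp add: scalar_prod_def power2_eq_square)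
  also have "\<dots> \<ge> (a $ j)^2" by (rule member_le_sum, insert assms, auto)
  finally show ?thesis using assms(3) by (smt (verit) zero_less_power2)
qed

lemma crit_upper:
  fixes A U F :: "real mat"
  assumes A: "A \<in> carrier_mat n n" and U: "U \<in> carrier_mat n n" and UtU: "U\<^sup>T * U = 1\<^sub>m n"
    and UUt: "U * U\<^sup>T = 1\<^sub>m n" and D: "U\<^sup>T * A * U = diagm n d"
    and p: "p permutes {..<n}" and Lp: "\<forall>i<n. L ! i = d (p i)"
    and mono: "\<forall>i j. i \<le> j \<longrightarrow> j < n \<longrightarrow> L ! j \<le> L ! i"
    and k: "1 \<le> k" "k \<le> n" and F: "F \<in> carrier_mat n k" and FtF: "F\<^sup>T * F = 1\<^sub>m k"
    and bound: "\<forall>a\<in>carrier_vec k. c * ((F *\<^sub>v a) \<bullet> (F *\<^sub>v a)) \<le> (F *\<^sub>v a) \<bullet> (A *\<^sub>v (F *\<^sub>v a))"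
  shows "c \<le> L ! (k - 1)"
proof -
  have Ut: "U\<^sup>T \<in> carrier_mat n n" using U by auto
  obtain a where a: "\<exists>j<k. a j \<noteq> 0" "\<forall>i<k-1. (\<Sum>j<k. (U\<^sup>T * F) $$ (p i, j) * a j) = 0"
    using hom_sys[of "k - 1" k "\<lambda>i j. (U\<^sup>T * F) $$ (p i, j)"] k by auto
  define av where "av = vec k a"
  have av: "av \<in> carrier_vec k" unfolding av_def by simp
  define x where "x = F *\<^sub>v av"
  have x: "x \<in> carrier_vec n" unfolding x_def using F av by auto
  have xx: "x \<bullet> x > 0" unfolding x_def isometry[OF F FtF av]
    using a(1) pos_of_nz[OF av] unfolding av_def by auto
  define c' where "c' = U\<^sup>T *\<^sub>v x"
  have c'eq: "c' = (U\<^sup>T * F) *\<^sub>v av" unfolding c'_def x_def using assoc_mult_mat_vec[OF Ut F av] by simp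
  have c'0: "c' $ (p i) = 0" if "i < k - 1" for i
  proof -
    have pi: "p i < n" using permutes_in_image[OF p, of i] that k by simp
    define GG where "GG = U\<^sup>T * F"
    have GG: "GG \<in> carrier_mat n k" unfolding GG_def using Ut F by auto
    have "c' $ (p i) = (\<Sum>j<k. GG $$ (p i, j) * a j)" unfolding c'eq av_def GG_def[symmetric]
      using pi GG by (auto simp: scalar_prod_def lessThan_atLeast0 intro!: sum.cong)
    hence "c' $ (p i) = (\<Sum>j<k. (U\<^sup>T * F) $$ (p i, j) * a j)" unfolding GG_def .
    thus ?thesis using a(2) that by simp
  qed
  note co = coords[OF A U UtU UUt D x, folded c'_def]
  have "x \<bullet> (A *\<^sub>v x) \<le> (\<Sum>i<n. L ! (k - 1) * (c' $ i)^2)" unfolding co(2)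
  proof (rule sum_mono)
    fix i assume i: "i \<in> {..<n}"
    define j where "j = inv_into UNIV p i"
    have j: "j < n" "p j = i" unfolding j_def using permutes_inv[OF p] i permutes_inverses(1)[OF p]
      by (auto dest: permutes_in_image[of _ _ i])
    show "d i * (c' $ i)^2 \<le> L ! (k - 1) * (c' $ i)^2"
    proof (cases "j < k - 1")
      case True thus ?thesis using c'0[OF True] j by simp
    next
      case False
      hence "L ! j \<le> L ! (k - 1)" using mono j by auto
      thus ?thesis using Lp j by (auto intro: mult_right_mono)
    qed
  qed
  also have "\<dots> = L ! (k - 1) * (x \<bullet> x)" unfolding co(1) by (simp add: sum_distrib_left)
  finally have "c * (x \<bullet> x) \<le> L ! (k - 1) * (x \<bullet> x)" using bound av unfolding x_def by force
  thus ?thesis using xx by simp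
qed

lemma crit_lower:
  fixes A U F :: "real mat"
  assumes A: "A \<in> carrier_mat n n" and U: "U \<in> carrier_mat n n" and UtU: "U\<^sup>T * U = 1\<^sub>m n"
    and UUt: "U * U\<^sup>T = 1\<^sub>m n" and D: "U\<^sup>T * A * U = diagm n d"
    and p: "p permutes {..<n}" and Lp: "\<forall>i<n. L ! i = d (p i)"
    and mono: "\<forall>i j. i \<le> j \<longrightarrow> j < n \<longrightarrow> L ! j \<le> L ! i"
    and k: "1 \<le> k" "k \<le> n" and F: "F \<in> carrier_mat n (Suc (n - k))" and FtF: "F\<^sup>T * F = 1\<^sub>m (Suc (n - k))"
    and bound: "\<forall>a\<in>carrier_vec (Suc (n - k)). (F *\<^sub>v a) \<bullet> (A *\<^sub>v (F *\<^sub>v a)) \<le> c * ((F *\<^sub>v a) \<bullet> (F *\<^sub>v a))"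
  shows "L ! (k - 1) \<le> c"
proof -
  define r where "r = Suc (n - k)"
  have Ut: "U\<^sup>T \<in> carrier_mat n n" using U by auto
  obtain a where a: "\<exists>j<r. a j \<noteq> 0" "\<forall>i<n-k. (\<Sum>j<r. (U\<^sup>T * F) $$ (p (k + i), j) * a j) = 0"
    using hom_sys[of "n - k" r "\<lambda>i j. (U\<^sup>T * F) $$ (p (k + i), j)"] unfolding r_def by auto
  define av where "av = vec r a"
  have av: "av \<in> carrier_vec r" unfolding av_def by simp
  define x where "x = F *\<^sub>v av"
  have x: "x \<in> carrier_vec n" unfolding x_def using F av unfolding r_def by auto
  have xx: "x \<bullet> x > 0" unfolding x_def isometry[OF F[folded r_def] FtF[folded r_def] av]
    using a(1) pos_of_nz[OF av] unfolding av_def by auto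
  define c' where "c' = U\<^sup>T *\<^sub>v x"
  have c'eq: "c' = (U\<^sup>T * F) *\<^sub>v av" unfolding c'_def x_def
    using assoc_mult_mat_vec[OF Ut F[folded r_def] av] by simp
  have c'0: "c' $ (p j) = 0" if "k \<le> j" "j < n" for j
  proof -
    define i where "i = j - k"
    have ji: "j = k + i" "i < n - k" using that unfolding i_def by auto
    have pi: "p j < n" using permutes_in_image[OF p, of j] that by simp
    define GG where "GG = U\<^sup>T * F"
    have GG: "GG \<in> carrier_mat n r" unfolding GG_def using Ut F[folded r_def] by auto
    have "c' $ (p j) = (\<Sum>j'<r. GG $$ (p j, j') * a j')" unfolding c'eq av_def GG_def[symmetric]
      using pi GG by (auto simp: scalar_prod_def lessThan_atLeast0 intro!: sum.cong)
    hence "c' $ (p j) = (\<Sum>j'<r. (U\<^sup>T * F) $$ (p j, j') * a j')" unfolding GG_def .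
    thus ?thesis using a(2) ji by simp
  qed
  note co = coords[OF A U UtU UUt D x, folded c'_def]
  have "L ! (k - 1) * (x \<bullet> x) = (\<Sum>i<n. L ! (k - 1) * (c' $ i)^2)" unfolding co(1) by (simp add: sum_distrib_left)
  also have "\<dots> \<le> x \<bullet> (A *\<^sub>v x)" unfolding co(2)
  proof (rule sum_mono)
    fix i assume i: "i \<in> {..<n}"
    define j where "j = inv_into UNIV p i"
    have j: "j < n" "p j = i" unfolding j_def using permutes_inv[OF p] i permutes_inverses(1)[OF p]
      by (auto dest: permutes_in_image[of _ _ i])
    show "L ! (k - 1) * (c' $ i)^2 \<le> d i * (c' $ i)^2"
    proof (cases "k \<le> j")
      case True thus ?thesis using c'0[OF True j(1)] j by simp
    next
      case False
      hence "L ! (k - 1) \<le> L ! j" using mono j k by auto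
      thus ?thesis using Lp j by (auto intro: mult_right_mono)
    qed
  qed
  finally have "L ! (k - 1) * (x \<bullet> x) \<le> c * (x \<bullet> x)" using bound av unfolding x_def r_def by force
  thus ?thesis using xx by simp
qed

lemma compose_iso:
  fixes J FB :: "real mat"
  assumes J: "J \<in> carrier_mat n m" "J\<^sup>T * J = 1\<^sub>m m" and FB: "FB \<in> carrier_mat m r" "FB\<^sup>T * FB = 1\<^sub>m r"
  shows "J * FB \<in> carrier_mat n r" "(J * FB)\<^sup>T * (J * FB) = 1\<^sub>m r"
proof -
  show "J * FB \<in> carrier_mat n r" using J FB by auto
  have Jt: "J\<^sup>T \<in> carrier_mat m n" and FBt: "FB\<^sup>T \<in> carrier_mat r m" using J FB by auto
  have "(J * FB)\<^sup>T * (J * FB) = FB\<^sup>T * J\<^sup>T * (J * FB)" using transpose_mult[OF J(1) FB(1)] by simp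
  also have "\<dots> = FB\<^sup>T * ((J\<^sup>T * J) * FB)"
    using assoc_mult_mat[OF FBt Jt mult_carrier_mat[OF J(1) FB(1)]] assoc_mult_mat[OF Jt J(1) FB(1)] by simp
  also have "\<dots> = 1\<^sub>m r" using J(2) FB by simp
  finally show "(J * FB)\<^sup>T * (J * FB) = 1\<^sub>m r" .
qed

lemma interlace_general:
  fixes A B J :: "real mat"
  assumes A: "A \<in> carrier_mat n n" "A\<^sup>T = A" and B: "B \<in> carrier_mat m m" "B\<^sup>T = B"
    and J: "J \<in> carrier_mat n m" "J\<^sup>T * J = 1\<^sub>m m" and mn: "m \<le> n"
    and lo: "\<forall>y\<in>carrier_vec m. y \<bullet> (B *\<^sub>v y) + c1 * (y \<bullet> y) \<le> (J *\<^sub>v y) \<bullet> (A *\<^sub>v (J *\<^sub>v y))"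
    and hi: "\<forall>y\<in>carrier_vec m. (J *\<^sub>v y) \<bullet> (A *\<^sub>v (J *\<^sub>v y)) \<le> y \<bullet> (B *\<^sub>v y) + c2 * (y \<bullet> y)"
    and i: "1 \<le> i" "i \<le> m"
  defines "LA \<equiv> rev (sorted_list_of_multiset (proots (char_poly A)))"
    and "LB \<equiv> rev (sorted_list_of_multiset (proots (char_poly B)))"
  shows "LB ! (i - 1) + c1 \<le> LA ! (i - 1) \<and> LA ! (n - m + i - 1) \<le> LB ! (i - 1) + c2"
proof -
  obtain UA dA pA where SA: "UA \<in> carrier_mat n n" "UA\<^sup>T * UA = 1\<^sub>m n" "UA * UA\<^sup>T = 1\<^sub>m n"
     "UA\<^sup>T * A * UA = diagm n dA" "pA permutes {..<n}" "\<forall>i<n. LA ! i = dA (pA i)"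
     "\<forall>i j. i \<le> j \<longrightarrow> j < n \<longrightarrow> LA ! j \<le> LA ! i"
    using spectral_sorted[OF A] unfolding LA_def by blast
  obtain UB dB pB where SB: "UB \<in> carrier_mat m m" "UB\<^sup>T * UB = 1\<^sub>m m" "UB * UB\<^sup>T = 1\<^sub>m m"
     "UB\<^sup>T * B * UB = diagm m dB" "pB permutes {..<m}" "\<forall>i<m. LB ! i = dB (pB i)"
     "\<forall>i j. i \<le> j \<longrightarrow> j < m \<longrightarrow> LB ! j \<le> LB ! i"
    using spectral_sorted[OF B] unfolding LB_def by blast
  have injB: "inj_on pB X" for X using permutes_inj[OF SB(5)] by (simp add: inj_on_def inj_def)
  have pBlt: "pB j < m" if "j < m" for j using permutes_in_image[OF SB(5), of j] that by simp
  have part1: "LB ! (i - 1) + c1 \<le> LA ! (i - 1)"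
  proof -
    obtain FB where FB: "FB \<in> carrier_mat m i" "FB\<^sup>T * FB = 1\<^sub>m i"
      "\<forall>a\<in>carrier_vec i. \<forall>\<beta>. (\<forall>j<i. \<beta> \<le> dB (pB j)) \<longrightarrow>
         \<beta> * ((FB *\<^sub>v a) \<bullet> (FB *\<^sub>v a)) \<le> (FB *\<^sub>v a) \<bullet> (B *\<^sub>v (FB *\<^sub>v a))"
    proof -
      have lt: "\<And>j. j < i \<Longrightarrow> pB j < m" using pBlt i by auto
      show ?thesis using family[OF B(1) SB(1-4) injB[of "{..<i}"] lt] that by blast
    qed
    have bd: "\<forall>j<i. LB ! (i - 1) \<le> dB (pB j)" using SB(6,7) i by auto
    note F = compose_iso[OF J FB(1,2)]
    show ?thesis
    proof (rule crit_upper[OF A(1) SA(1-7) _ _ F])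
      show "1 \<le> i" "i \<le> n" using i mn by auto
      show "\<forall>a\<in>carrier_vec i. (LB ! (i - 1) + c1) * ((J * FB *\<^sub>v a) \<bullet> (J * FB *\<^sub>v a))
          \<le> (J * FB *\<^sub>v a) \<bullet> (A *\<^sub>v (J * FB *\<^sub>v a))"
      proof
        fix a :: "real vec" assume a: "a \<in> carrier_vec i"
        define y where "y = FB *\<^sub>v a"
        have y: "y \<in> carrier_vec m" unfolding y_def using FB a by auto
        have Fa: "J * FB *\<^sub>v a = J *\<^sub>v y" unfolding y_def using assoc_mult_mat_vec[OF J(1) FB(1) a] .
        have "(LB ! (i - 1) + c1) * ((J *\<^sub>v y) \<bullet> (J *\<^sub>v y)) = LB ! (i - 1) * (y \<bullet> y) + c1 * (y \<bullet> y)"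
          unfolding isometry[OF J y] by (simp add: algebra_simps)
        also have "\<dots> \<le> y \<bullet> (B *\<^sub>v y) + c1 * (y \<bullet> y)" using FB(3) a bd unfolding y_def by auto
        also have "\<dots> \<le> (J *\<^sub>v y) \<bullet> (A *\<^sub>v (J *\<^sub>v y))" using lo y by auto
        finally show "(LB ! (i - 1) + c1) * ((J * FB *\<^sub>v a) \<bullet> (J * FB *\<^sub>v a))
          \<le> (J * FB *\<^sub>v a) \<bullet> (A *\<^sub>v (J * FB *\<^sub>v a))" unfolding Fa .
      qed
    qed
  qed
  have part2: "LA ! (n - m + i - 1) \<le> LB ! (i - 1) + c2"
  proof -
    define r where "r = Suc (m - i)"
    define g where "g = (\<lambda>j. pB (i - 1 + j))"
    have injg: "inj_on g {..<r}" unfolding g_def inj_on_def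
    proof (intro ballI impI)
      fix x y assume "pB (i - 1 + x) = pB (i - 1 + y)"
      hence "i - 1 + x = i - 1 + y" using injB[of UNIV] unfolding inj_on_def by blast
      thus "x = y" by simp
    qed
    have glt: "g j < m" if "j < r" for j unfolding g_def using pBlt that i unfolding r_def by auto
    obtain FB where FB: "FB \<in> carrier_mat m r" "FB\<^sup>T * FB = 1\<^sub>m r"
      "\<forall>a\<in>carrier_vec r. \<forall>\<beta>. (\<forall>j<r. dB (g j) \<le> \<beta>) \<longrightarrow>
         (FB *\<^sub>v a) \<bullet> (B *\<^sub>v (FB *\<^sub>v a)) \<le> \<beta> * ((FB *\<^sub>v a) \<bullet> (FB *\<^sub>v a))"
      using family[OF B(1) SB(1-4) injg glt] by blast
    have bd: "\<forall>j<r. dB (g j) \<le> LB ! (i - 1)" using SB(6,7) i unfolding g_def r_def by auto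
    define k where "k = n - m + i"
    have rk: "r = Suc (n - k)" unfolding r_def k_def using i mn by auto
    note F = compose_iso[OF J FB(1,2), unfolded rk]
    have "LA ! (k - 1) \<le> LB ! (i - 1) + c2"
    proof (rule crit_lower[OF A(1) SA(1-7) _ _ F])
      show "1 \<le> k" "k \<le> n" unfolding k_def using i mn by auto
      show "\<forall>a\<in>carrier_vec (Suc (n - k)). (J * FB *\<^sub>v a) \<bullet> (A *\<^sub>v (J * FB *\<^sub>v a))
          \<le> (LB ! (i - 1) + c2) * ((J * FB *\<^sub>v a) \<bullet> (J * FB *\<^sub>v a))"
      proof
        fix a :: "real vec" assume a: "a \<in> carrier_vec (Suc (n - k))"
        hence a': "a \<in> carrier_vec r" using rk by simp
        define y where "y = FB *\<^sub>v a"
        have y: "y \<in> carrier_vec m" unfolding y_def using FB a' by auto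
        have Fa: "J * FB *\<^sub>v a = J *\<^sub>v y" unfolding y_def using assoc_mult_mat_vec[OF J(1) FB(1) a'] .
        have "(J *\<^sub>v y) \<bullet> (A *\<^sub>v (J *\<^sub>v y)) \<le> y \<bullet> (B *\<^sub>v y) + c2 * (y \<bullet> y)" using hi y by auto
        also have "\<dots> \<le> LB ! (i - 1) * (y \<bullet> y) + c2 * (y \<bullet> y)" using FB(3) a' bd unfolding y_def by auto
        also have "\<dots> = (LB ! (i - 1) + c2) * ((J *\<^sub>v y) \<bullet> (J *\<^sub>v y))"
          unfolding isometry[OF J y] by (simp add: algebra_simps)
        finally show "(J * FB *\<^sub>v a) \<bullet> (A *\<^sub>v (J * FB *\<^sub>v a))
          \<le> (LB ! (i - 1) + c2) * ((J * FB *\<^sub>v a) \<bullet> (J * FB *\<^sub>v a))" unfolding Fa .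
      qed
    qed
    thus ?thesis unfolding k_def .
  qed
  show ?thesis using part1 part2 by simp
qed



definition sgn_or :: "('a set \<Rightarrow> 'a) \<Rightarrow> ('a set \<Rightarrow> 'a) \<Rightarrow> 'a set \<Rightarrow> real" where
  "sgn_or o1 o2 e = (if o1 e = o2 e then 1 else -1)"

definition val_or :: "('a set \<Rightarrow> 'a) \<Rightarrow> 'a set \<Rightarrow> 'a set \<Rightarrow> real" where
  "val_or o1 e f = (if head_tail_adj o1 e f then -1 else if same_end_adj o1 e f then 1 else 0)"

lemma ehead_pair: assumes "a \<noteq> b" "o1 {a,b} \<in> {a,b}"
  shows "ehead o1 {a,b} = (if o1 {a,b} = a then b else a)"
  unfolding ehead_def using assms by (auto intro!: the_equality)

lemma val_shared:
  fixes o1 :: "'a set \<Rightarrow> 'a"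
  assumes xy: "x \<noteq> y" and xz: "x \<noteq> z" and yz: "y \<noteq> z"
    and o1: "o1 {x,y} \<in> {x,y}" "o1 {x,z} \<in> {x,z}"
  shows "val_or o1 {x,y} {x,z} = (if (o1 {x,y} = x) = (o1 {x,z} = x) then 1 else -1)"
proof -
  note h1 = ehead_pair[of x y o1, OF xy o1(1)] and h2 = ehead_pair[of x z o1, OF xz o1(2)]
  show ?thesis
  proof (cases "o1 {x,y} = x")
    case T1: True
    show ?thesis
    proof (cases "o1 {x,z} = x")
      case True
      thus ?thesis using T1 h1 h2 xy xz yz
        unfolding val_or_def head_tail_adj_def same_end_adj_def etail_def by auto
    next
      case False
      hence "o1 {x,z} = z" using o1(2) by auto
      thus ?thesis using T1 h1 h2 xy xz yz False
        unfolding val_or_def head_tail_adj_def same_end_adj_def etail_def by auto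
    qed
  next
    case F1: False
    hence F1': "o1 {x,y} = y" using o1(1) by auto
    show ?thesis
    proof (cases "o1 {x,z} = x")
      case True
      thus ?thesis using F1 F1' h1 h2 xy xz yz
        unfolding val_or_def head_tail_adj_def same_end_adj_def etail_def by auto
    next
      case False
      hence "o1 {x,z} = z" using o1(2) by auto
      thus ?thesis using F1 F1' h1 h2 xy xz yz False
        unfolding val_or_def head_tail_adj_def same_end_adj_def etail_def by auto
    qed
  qed
qed

lemma val_disjoint:
  fixes o1 :: "'a set \<Rightarrow> 'a"
  assumes "card e = 2" "card f = 2" "e \<inter> f = {}" "o1 e \<in> e" "o1 f \<in> f"
  shows "val_or o1 e f = 0"
proof -
  obtain a b where e: "e = {a,b}" "a \<noteq> b" using assms(1) unfolding card_2_iff by blast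
  obtain c d where f: "f = {c,d}" "c \<noteq> d" using assms(2) unfolding card_2_iff by blast
  have he: "ehead o1 e \<in> e" unfolding e(1) using ehead_pair[of a b o1, OF e(2)] assms(4)[unfolded e(1)] by simp
  have hf: "ehead o1 f \<in> f" unfolding f(1) using ehead_pair[of c d o1, OF f(2)] assms(5)[unfolded f(1)] by simp
  have "ehead o1 e \<noteq> o1 f" "ehead o1 f \<noteq> o1 e" "ehead o1 e \<noteq> ehead o1 f" "o1 e \<noteq> o1 f"
    using he hf assms(3-5) by (metis disjoint_iff)+
  thus ?thesis unfolding val_or_def head_tail_adj_def same_end_adj_def etail_def
    by simp
qed

lemma card2_other: assumes "card e = 2" "x \<in> e" shows "\<exists>y. e = {x,y} \<and> x \<noteq> y"
proof -
  obtain a b where e: "e = {a,b}" "a \<noteq> b" using assms(1) unfolding card_2_iff by blast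
  show ?thesis
  proof (cases "x = a")
    case True thus ?thesis using e by blast
  next
    case False hence "x = b" using assms(2) e by blast
    thus ?thesis using e by (intro exI[of _ a], auto)
  qed
qed

lemma flip_lemma:
  fixes o1 o2 :: "'a set \<Rightarrow> 'a"
  assumes "card e = 2" "card f = 2" "e \<noteq> f" "o1 e \<in> e" "o1 f \<in> f" "o2 e \<in> e" "o2 f \<in> f"
  shows "sgn_or o1 o2 e * sgn_or o1 o2 f * val_or o1 e f = val_or o2 e f"
proof (cases "e \<inter> f = {}")
  case True thus ?thesis using val_disjoint[OF assms(1,2) True] assms by simp
next
  case False
  then obtain x where x: "x \<in> e" "x \<in> f" by auto
  obtain y where e: "e = {x,y}" "x \<noteq> y" using card2_other[OF assms(1) x(1)] by blast
  obtain z where f: "f = {x,z}" "x \<noteq> z" using card2_other[OF assms(2) x(2)] by blast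
  have yz: "y \<noteq> z" using assms(3) e f by auto
  have s1: "sgn_or o1 o2 e = (if (o1 e = x) = (o2 e = x) then 1 else -1)"
    using assms(4,6) e unfolding sgn_or_def by auto
  have s2: "sgn_or o1 o2 f = (if (o1 f = x) = (o2 f = x) then 1 else -1)"
    using assms(5,7) f unfolding sgn_or_def by auto
  show ?thesis unfolding s1 s2 unfolding e f
    using val_shared[OF e(2) f(2) yz, of o1] val_shared[OF e(2) f(2) yz, of o2] assms(4-7)
    unfolding e f by auto
qed

lemma tri_induced:
  assumes sg: "simple_graph V E" and e: "e \<in> induced_edges E W" and f: "f \<in> induced_edges E W"
  shows "in_common_tri E e f \<longleftrightarrow> in_common_tri (induced_edges E W) e f"
proof
  assume "in_common_tri (induced_edges E W) e f"
  then obtain a b c where abc: "a \<noteq> b" "b \<noteq> c" "a \<noteq> c" "{a,b} \<in> induced_edges E W"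
    "{b,c} \<in> induced_edges E W" "{a,c} \<in> induced_edges E W"
    "e \<subseteq> {a,b,c}" "f \<subseteq> {a,b,c}" and ef: "e \<noteq> f"
    unfolding in_common_tri_def by blast
  have sub: "induced_edges E W \<subseteq> E" unfolding induced_edges_def by auto
  have eE: "e \<in> E" "f \<in> E" using e f sub by auto
  have "{a,b} \<in> E" "{b,c} \<in> E" "{a,c} \<in> E" using abc(4-6) sub by auto
  thus "in_common_tri E e f" unfolding in_common_tri_def
    by (intro conjI ef eE exI[of _ a] exI[of _ b] exI[of _ c]) (use abc in auto)
next
  assume t: "in_common_tri E e f"
  then obtain a b c where abc: "a \<noteq> b" "b \<noteq> c" "a \<noteq> c" "{a,b} \<in> E" "{b,c} \<in> E" "{a,c} \<in> E"
    "e \<subseteq> {a,b,c}" "f \<subseteq> {a,b,c}" and ef: "e \<noteq> f"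
    unfolding in_common_tri_def by blast
  have eE: "e \<in> E" "e \<subseteq> W" and fE: "f \<in> E" "f \<subseteq> W" using e f unfolding induced_edges_def by auto
  have ce: "card e = 2" and cf: "card f = 2" using sg eE fE unfolding simple_graph_def by auto
  have fine: "finite e" "finite f" using ce cf by (metis card.infinite zero_neq_numeral)+
  have "card (e \<inter> f) < card e"
  proof (rule psubset_card_mono[OF fine(1)])
    show "e \<inter> f \<subset> e"
    proof
      show "e \<inter> f \<subseteq> e" by auto
      show "e \<inter> f \<noteq> e"
      proof
        assume "e \<inter> f = e"
        hence "e \<subseteq> f" by auto
        hence "e = f" using card_subset_eq[OF fine(2)] ce cf by auto
        thus False using ef by simp
      qed
    qed
  qed
  hence "card (e \<union> f) \<ge> 3" using card_Un_Int[OF fine] ce cf by simp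
  moreover have "card {a,b,c} = 3" using abc(1-3) by simp
  moreover have "e \<union> f \<subseteq> {a,b,c}" using abc(7,8) by auto
  moreover have "card (e \<union> f) \<le> card {a,b,c}" by (rule card_mono, simp, fact)
  ultimately have "e \<union> f = {a,b,c}" using card_subset_eq[of "{a,b,c}" "e \<union> f"] by simp
  hence W: "{a,b,c} \<subseteq> W" using eE fE by auto
  have "{a,b} \<in> induced_edges E W" "{b,c} \<in> induced_edges E W" "{a,c} \<in> induced_edges E W"
    using abc(4-6) W unfolding induced_edges_def by auto
  thus "in_common_tri (induced_edges E W) e f" unfolding in_common_tri_def
    using abc(1-3,7,8) e f ef by blast
qed

lemma helm_offdiag:
  "e \<noteq> f \<Longrightarrow> helm_entry X o1 e f = (if in_common_tri X e f then 0 else val_or o1 e f)"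
  unfolding helm_entry_def val_or_def by auto

lemma helm_rel:
  assumes sg: "simple_graph V E" and oE: "orientation E ori"
    and oE': "orientation (induced_edges E W) ori'"
    and e: "e \<in> induced_edges E W" and f: "f \<in> induced_edges E W"
  shows "sgn_or ori ori' e * sgn_or ori ori' f * helm_entry E ori e f
     = helm_entry (induced_edges E W) ori' e f + (if e = f then kappa E (induced_edges E W) e else 0)"
proof (cases "e = f")
  case True
  thus ?thesis unfolding helm_entry_def kappa_def sgn_or_def by auto
next
  case False
  have eE: "e \<in> E" and fE: "f \<in> E" using e f unfolding induced_edges_def by auto
  have ce: "card e = 2" and cf: "card f = 2" using sg eE fE unfolding simple_graph_def by auto
  have o: "ori e \<in> e" "ori f \<in> f" "ori' e \<in> e" "ori' f \<in> f"
    using oE oE' eE fE e f unfolding orientation_def by auto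
  note fl = flip_lemma[OF ce cf False o]
  show ?thesis unfolding helm_offdiag[OF False] tri_induced[OF sg e f, symmetric]
    using fl False by auto
qed

lemma tri_sym1: assumes "in_common_tri X e f" shows "in_common_tri X f e"
proof -
  obtain a b c where abc: "a \<noteq> b" "b \<noteq> c" "a \<noteq> c" "{a,b} \<in> X"
    "{b,c} \<in> X" "{a,c} \<in> X" "e \<subseteq> {a,b,c}" "f \<subseteq> {a,b,c}" and ef: "e \<noteq> f" "e \<in> X" "f \<in> X"
    using assms unfolding in_common_tri_def by blast
  show ?thesis unfolding in_common_tri_def
    by (intro conjI exI[of _ a] exI[of _ b] exI[of _ c]) (use abc ef in auto)
qed

lemma tri_sym: "in_common_tri X e f = in_common_tri X f e"
  using tri_sym1 by blast

lemma ht_sym: "head_tail_adj o1 e f = head_tail_adj o1 f e"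
  unfolding head_tail_adj_def by blast

lemma se_sym: "same_end_adj o1 e f = same_end_adj o1 f e"
  unfolding same_end_adj_def by (simp add: eq_commute disj_commute)

lemma helm_sym: "helm_entry X o1 e f = helm_entry X o1 f e"
  unfolding helm_entry_def using tri_sym[of X e f] ht_sym[of o1 e f] se_sym[of o1 e f] by simp

lemma edge_list_props: assumes "finite X" shows "set (edge_list X) = X" "distinct (edge_list X)"
proof -
  have "\<exists>xs. set xs = X \<and> distinct xs" using finite_distinct_list[OF assms] .
  from someI_ex[OF this] show "set (edge_list X) = X" "distinct (edge_list X)"
    unfolding edge_list_def by auto
qed

lemma helm_mat: "helmholtzian X o1 = mat (length (edge_list X)) (length (edge_list X))
    (\<lambda>(i, j). helm_entry X o1 (edge_list X ! i) (edge_list X ! j))"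
  unfolding helmholtzian_def Let_def ..

lemma helm_carrier: "helmholtzian X o1 \<in> carrier_mat (length (edge_list X)) (length (edge_list X))"
  unfolding helm_mat by auto

lemma helm_transpose: "(helmholtzian X o1)\<^sup>T = helmholtzian X o1"
  unfolding helm_mat by (rule eq_matI, auto simp: helm_sym)

lemma sum_delta_l: "(c::nat) < m \<Longrightarrow> (\<Sum>i = 0..<m. (if i = c then x else 0) * (y i :: real)) = x * y c"
proof -
  assume c: "c < m"
  have "(\<Sum>i = 0..<m. (if i = c then x else 0) * y i) = (\<Sum>i = 0..<m. if i = c then x * y i else 0)"
    by (rule sum.cong, auto)
  also have "\<dots> = x * y c" using c by (subst sum.delta, auto)
  finally show ?thesis .
qed

lemma sum_delta_r: "(c::nat) < m \<Longrightarrow> (\<Sum>i = 0..<m. (y i :: real) * (if i = c then x else 0)) = y c * x"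
  using sum_delta_l[of c m x y] by (simp add: mult.commute)

lemma sel_mat:
  fixes H :: "real mat" and s :: "nat \<Rightarrow> real"
  assumes H: "H \<in> carrier_mat m m" and io: "\<forall>a<m'. io a < m"
    and J: "J = mat m m' (\<lambda>(i,a). if i = io a then s a else 0)"
    and a: "a < m'" and b: "b < m'"
  shows "(J\<^sup>T * H * J) $$ (a,b) = s a * s b * H $$ (io a, io b)"
    and "(J\<^sup>T * J) $$ (a,b) = (if io a = io b then s a * s b else 0)"
proof -
  have Jc: "J \<in> carrier_mat m m'" unfolding J by auto
  have r1: "(J\<^sup>T * H) $$ (a, j) = s a * H $$ (io a, j)" if j: "j < m" for j
  proof -
    have "(J\<^sup>T * H) $$ (a, j) = (\<Sum>i = 0..<m. (if i = io a then s a else 0) * H $$ (i, j))"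
      using a j H unfolding J by (simp add: scalar_prod_def)
    also have "\<dots> = s a * H $$ (io a, j)" using sum_delta_l[of "io a" m "s a" "\<lambda>i. H $$ (i, j)"] io a by simp
    finally show ?thesis .
  qed
  have "(J\<^sup>T * H * J) $$ (a,b) = (\<Sum>j = 0..<m. (J\<^sup>T * H) $$ (a, j) * (if j = io b then s b else 0))"
    using a b H unfolding J by (simp add: scalar_prod_def)
  also have "\<dots> = (\<Sum>j = 0..<m. (s a * H $$ (io a, j)) * (if j = io b then s b else 0))"
    by (rule sum.cong, auto simp: r1)
  also have "\<dots> = s a * H $$ (io a, io b) * s b" by (rule sum_delta_r, insert io b, auto)
  finally show "(J\<^sup>T * H * J) $$ (a,b) = s a * s b * H $$ (io a, io b)" by simp
  have "(J\<^sup>T * J) $$ (a,b) = (\<Sum>j = 0..<m. (if j = io a then s a else 0) * (if j = io b then s b else 0))"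
    using a b unfolding J by (simp add: scalar_prod_def)
  also have "\<dots> = (if io a = io b then s a * s b else 0)"
    by (subst sum_delta_l, insert io a, auto)
  finally show "(J\<^sup>T * J) $$ (a,b) = (if io a = io b then s a * s b else 0)" .
qed

theorem theorem4p2:
  fixes V W :: "'a set" and E :: "'a set set" and ori ori' :: "'a set \<Rightarrow> 'a"
  assumes "simple_graph V E"
    and "card E \<ge> 1"
    and "W \<subseteq> V"
    and "card (induced_edges E W) \<ge> 1"
    and "orientation E ori"
    and "orientation (induced_edges E W) ori'"
  shows "\<forall>i. 1 \<le> i \<and> i \<le> card (induced_edges E W) \<longrightarrow>
     H_eig E ori i \<ge> H_eig (induced_edges E W) ori' i + kappa_min E (induced_edges E W)
   \<and> H_eig (induced_edges E W) ori' i + kappa_max E (induced_edges E W)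
       \<ge> H_eig E ori (card E - card (induced_edges E W) + i)"
proof (intro allI impI)
  fix i assume i: "1 \<le> i \<and> i \<le> card (induced_edges E W)"
  define E' where "E' = induced_edges E W"
  note sg = assms(1)
  have finE: "finite E" using assms(2) by (metis card.infinite not_one_le_zero)
  have sub: "E' \<subseteq> E" unfolding E'_def induced_edges_def by auto
  have finE': "finite E'" using finite_subset[OF sub finE] .
  define es where "es = edge_list E"
  define es' where "es' = edge_list E'"
  note esp = edge_list_props[OF finE, folded es_def]
  note esp' = edge_list_props[OF finE', folded es'_def]
  define m where "m = length es"
  define m' where "m' = length es'"
  have m: "m = card E" unfolding m_def using distinct_card[OF esp(2)] esp(1) by simp
  have m': "m' = card E'" unfolding m'_def using distinct_card[OF esp'(2)] esp'(1) by simp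
  have mm: "m' \<le> m" unfolding m m' using card_mono[OF finE sub] .
  define io where "io = (\<lambda>a. SOME i. i < m \<and> es ! i = es' ! a)"
  have io: "io a < m \<and> es ! (io a) = es' ! a" if a: "a < m'" for a
  proof -
    have "es' ! a \<in> E" using a esp'(1) sub unfolding m'_def by auto
    hence "\<exists>i. i < m \<and> es ! i = es' ! a" using esp(1) unfolding m_def by (metis in_set_conv_nth)
    from someI_ex[OF this] show ?thesis unfolding io_def .
  qed
  have io_inj: "a = b" if "a < m'" "b < m'" "io a = io b" for a b
  proof -
    have "es' ! a = es' ! b" using io[OF that(1)] io[OF that(2)] that(3) by metis
    thus ?thesis using nth_eq_iff_index_eq[OF esp'(2)] that unfolding m'_def by blast
  qed
  have inE': "es' ! a \<in> E'" if "a < m'" for a using that esp'(1) unfolding m'_def by auto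
  define H where "H = helmholtzian E ori"
  define H' where "H' = helmholtzian E' ori'"
  have H: "H \<in> carrier_mat m m" unfolding H_def m_def es_def by (rule helm_carrier)
  have H': "H' \<in> carrier_mat m' m'" unfolding H'_def m'_def es'_def by (rule helm_carrier)
  have Hij: "H $$ (x, y) = helm_entry E ori (es ! x) (es ! y)" if "x < m" "y < m" for x y
    using that unfolding H_def helm_mat m_def es_def by simp
  have H'ij: "H' $$ (x, y) = helm_entry E' ori' (es' ! x) (es' ! y)" if "x < m'" "y < m'" for x y
    using that unfolding H'_def helm_mat m'_def es'_def by simp
  define s where "s = (\<lambda>a. sgn_or ori ori' (es' ! a))"
  define J where "J = mat m m' (\<lambda>(i,a). if i = io a then s a else 0)"
  have J: "J \<in> carrier_mat m m'" unfolding J_def by auto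
  have io': "\<forall>a<m'. io a < m" using io by auto
  define \<kappa> where "\<kappa> = (\<lambda>a. kappa E E' (es' ! a))"
  define D where "D = diagm m' \<kappa>"
  have D: "D \<in> carrier_mat m' m'" unfolding D_def by simp
  have JtJ: "J\<^sup>T * J = 1\<^sub>m m'"
  proof (rule eq_matI)
    fix a b assume "a < dim_row (1\<^sub>m m')" "b < dim_col (1\<^sub>m m')"
    hence a: "a < m'" and b: "b < m'" by auto
    have ss: "s a * s a = 1" unfolding s_def sgn_or_def by simp
    show "(J\<^sup>T * J) $$ (a, b) = 1\<^sub>m m' $$ (a, b)"
      unfolding sel_mat(2)[OF H io' J_def a b] using io_inj[OF a b] ss a b by auto
  qed (insert J, auto)
  have JHJ: "J\<^sup>T * H * J = H' + D"
  proof (rule eq_matI)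
    fix a b assume "a < dim_row (H' + D)" "b < dim_col (H' + D)"
    hence a: "a < m'" and b: "b < m'" using H' D by auto
    have "(J\<^sup>T * H * J) $$ (a, b) = s a * s b * helm_entry E ori (es' ! a) (es' ! b)"
      unfolding sel_mat(1)[OF H io' J_def a b] using Hij io[OF a] io[OF b] by simp
    also have "\<dots> = helm_entry E' ori' (es' ! a) (es' ! b) + (if es' ! a = es' ! b then \<kappa> a else 0)"
      unfolding s_def \<kappa>_def E'_def
      by (rule helm_rel[OF sg assms(5) assms(6)[folded E'_def, unfolded E'_def]], insert inE'[OF a] inE'[OF b], auto simp: E'_def)
    also have "(es' ! a = es' ! b) = (a = b)" using nth_eq_iff_index_eq[OF esp'(2)] a b unfolding m'_def by blast
    finally show "(J\<^sup>T * H * J) $$ (a, b) = (H' + D) $$ (a, b)"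
      using H'ij[OF a b] a b H' D by (simp add: D_def diagm_def)
  qed (insert J H H' D, auto)
  have quad: "(J *\<^sub>v y) \<bullet> (H *\<^sub>v (J *\<^sub>v y)) = y \<bullet> (H' *\<^sub>v y) + (\<Sum>a<m'. \<kappa> a * (y $ a)^2)"
    if y: "y \<in> carrier_vec m'" for y
  proof -
    have Jt: "J\<^sup>T \<in> carrier_mat m' m" using J by auto
    have Jy: "J *\<^sub>v y \<in> carrier_vec m" using J y by auto
    have HJy: "H *\<^sub>v (J *\<^sub>v y) \<in> carrier_vec m" using H Jy by auto
    have "(J *\<^sub>v y) \<bullet> (H *\<^sub>v (J *\<^sub>v y)) = (H *\<^sub>v (J *\<^sub>v y)) \<bullet> (J *\<^sub>v y)"
      using comm_scalar_prod[OF Jy HJy] .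
    also have "\<dots> = (J\<^sup>T *\<^sub>v (H *\<^sub>v (J *\<^sub>v y))) \<bullet> y" using transpose_vec_mult_scalar[OF J y HJy] by simp
    also have "J\<^sup>T *\<^sub>v (H *\<^sub>v (J *\<^sub>v y)) = (J\<^sup>T * H * J) *\<^sub>v y"
      using assoc_mult_mat_vec[OF Jt H Jy] assoc_mult_mat_vec[OF mult_carrier_mat[OF Jt H] J y] by simp
    also have "\<dots> = H' *\<^sub>v y + D *\<^sub>v y" unfolding JHJ using add_mult_distrib_mat_vec[OF H' D y] .
    also have "(H' *\<^sub>v y + D *\<^sub>v y) \<bullet> y = y \<bullet> (H' *\<^sub>v y) + y \<bullet> (D *\<^sub>v y)"
      using H' D y by (metis add_carrier_vec comm_scalar_prod mult_mat_vec_carrier scalar_prod_add_distrib)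
    also have "y \<bullet> (D *\<^sub>v y) = (\<Sum>a<m'. \<kappa> a * (y $ a)^2)" unfolding D_def
      using y unfolding scalar_prod_def lessThan_atLeast0
      by (intro sum.cong, auto simp: diagm_mult_vec[OF y] power2_eq_square simp del: index_mult_mat_vec)
    finally show ?thesis .
  qed
  have yy: "y \<bullet> y = (\<Sum>a<m'. (y $ a)^2)" if "y \<in> carrier_vec m'" for y :: "real vec"
    using that by (simp add: scalar_prod_def power2_eq_square lessThan_atLeast0)
  have kmin: "kappa_min E E' \<le> \<kappa> a" and kmax: "\<kappa> a \<le> kappa_max E E'" if a: "a < m'" for a
    unfolding kappa_min_def kappa_max_def \<kappa>_def using inE'[OF a] finE' by auto
  have lo: "\<forall>y\<in>carrier_vec m'. y \<bullet> (H' *\<^sub>v y) + kappa_min E E' * (y \<bullet> y) \<le> (J *\<^sub>v y) \<bullet> (H *\<^sub>v (J *\<^sub>v y))"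
  proof
    fix y :: "real vec" assume y: "y \<in> carrier_vec m'"
    have "kappa_min E E' * (y \<bullet> y) \<le> (\<Sum>a<m'. \<kappa> a * (y $ a)^2)" unfolding yy[OF y] sum_distrib_left
      by (rule sum_mono, rule mult_right_mono, insert kmin, auto)
    thus "y \<bullet> (H' *\<^sub>v y) + kappa_min E E' * (y \<bullet> y) \<le> (J *\<^sub>v y) \<bullet> (H *\<^sub>v (J *\<^sub>v y))" unfolding quad[OF y] by simp
  qed
  have hi: "\<forall>y\<in>carrier_vec m'. (J *\<^sub>v y) \<bullet> (H *\<^sub>v (J *\<^sub>v y)) \<le> y \<bullet> (H' *\<^sub>v y) + kappa_max E E' * (y \<bullet> y)"
  proof
    fix y :: "real vec" assume y: "y \<in> carrier_vec m'"
    have "(\<Sum>a<m'. \<kappa> a * (y $ a)^2) \<le> kappa_max E E' * (y \<bullet> y)" unfolding yy[OF y] sum_distrib_left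
      by (rule sum_mono, rule mult_right_mono, insert kmax, auto)
    thus "(J *\<^sub>v y) \<bullet> (H *\<^sub>v (J *\<^sub>v y)) \<le> y \<bullet> (H' *\<^sub>v y) + kappa_max E E' * (y \<bullet> y)" unfolding quad[OF y] by simp
  qed
  have i': "1 \<le> i" "i \<le> m'" using i unfolding m' E'_def by auto
  note res = interlace_general[OF H helm_transpose[of E ori, folded H_def] H' helm_transpose[of E' ori', folded H'_def]
      J JtJ mm lo hi i']
  show "H_eig E' ori' i + kappa_min E E' \<le> H_eig E ori i \<and>
        H_eig E ori (card E - card E' + i) \<le> H_eig E' ori' i + kappa_max E E'"
    using res unfolding H_eig_def H_def H'_def m m' by simp
qed

end
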